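(* Let $G$ be a finite group and suppose there is an element $s \in G$ such that $\mathcal{M}(G,s) = \{H\}$ and $H$ is core-free in $G$. Then $b(G,G/H)$ equals the minimal size of a total dominating set for $\Gamma(G)$ consisting only of conjugates of $s$.
   Context: $G^{\#}$ is the set of non-identity elements of $G$. The generating graph $\Gamma(G)$ has vertex set $G^{\#}$, with $x,y$ adjacent iff $G=\langle x,y\rangle$. A subset $S\subseteq G^{\#}$ is a total dominating set for $\Gamma(G)$ if for every $g\in G^{\#}$ there exists $s\in S$ with $G=\langle g,s\rangle$. $\mathcal{M}(G,g)$ denotes the set of maximal subgroups of $G$ containing $g$. For a group acting faithfully on a finite set $\Omega$, a base is a subset of $\Omega$ whose pointwise stabiliser is trivial, and $b(G,\Omega)$ is the minimal size of a base; $G/H$ is the set of right cosets of $H$ with $G$ acting by right multiplication (faithful when $H$ is core-free). *)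

theory Defs
  imports "HOL-Algebra.Algebra"
begin

definition maximal_subgroup :: "('a, 'b) monoid_scheme \<Rightarrow> 'a set \<Rightarrow> bool" where
  "maximal_subgroup G H \<longleftrightarrow> subgroup H G \<and> H \<noteq> carrier G \<and>
     (\<forall>K. subgroup K G \<and> H \<subseteq> K \<longrightarrow> K = H \<or> K = carrier G)"

definition max_subgroups_containing :: "('a, 'b) monoid_scheme \<Rightarrow> 'a \<Rightarrow> 'a set set" where
  "max_subgroups_containing G g = {H. maximal_subgroup G H \<and> g \<in> H}"

definition core_free :: "('a, 'b) monoid_scheme \<Rightarrow> 'a set \<Rightarrow> bool" where
  "core_free G H \<longleftrightarrow>
     (\<Inter>g\<in>carrier G. {g \<otimes>\<^bsub>G\<^esub> h \<otimes>\<^bsub>G\<^esub> inv\<^bsub>G\<^esub> g | h. h \<in> H}) = {\<one>\<^bsub>G\<^esub>}"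

definition nonid :: "('a, 'b) monoid_scheme \<Rightarrow> 'a set" where
  "nonid G = carrier G - {\<one>\<^bsub>G\<^esub>}"

definition total_dominating :: "('a, 'b) monoid_scheme \<Rightarrow> 'a set \<Rightarrow> bool" where
  "total_dominating G S \<longleftrightarrow> S \<subseteq> nonid G \<and>
     (\<forall>g\<in>nonid G. \<exists>x\<in>S. generate G {g, x} = carrier G)"

definition conjugates :: "('a, 'b) monoid_scheme \<Rightarrow> 'a \<Rightarrow> 'a set" where
  "conjugates G s = {g \<otimes>\<^bsub>G\<^esub> s \<otimes>\<^bsub>G\<^esub> inv\<^bsub>G\<^esub> g | g. g \<in> carrier G}"

definition min_conj_tds :: "('a, 'b) monoid_scheme \<Rightarrow> 'a \<Rightarrow> nat" where
  "min_conj_tds G s = (LEAST n. \<exists>S. S \<subseteq> conjugates G s \<and> total_dominating G S \<and> card S = n)"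

text \<open>Action of G on right cosets G/H by right multiplication; a base is a set of cosets
  whose pointwise stabiliser is trivial.\<close>
definition is_coset_base :: "('a, 'b) monoid_scheme \<Rightarrow> 'a set \<Rightarrow> 'a set set \<Rightarrow> bool" where
  "is_coset_base G H B \<longleftrightarrow> B \<subseteq> rcosets\<^bsub>G\<^esub> H \<and>
     {g \<in> carrier G. \<forall>C\<in>B. C #>\<^bsub>G\<^esub> g = C} = {\<one>\<^bsub>G\<^esub>}"

definition base_size :: "('a, 'b) monoid_scheme \<Rightarrow> 'a set \<Rightarrow> nat" where
  "base_size G H = (LEAST n. \<exists>B. is_coset_base G H B \<and> card B = n)"

end

theory Submission
  imports Defs
begin

definition cjg :: "('a, 'b) monoid_scheme \<Rightarrow> 'a \<Rightarrow> 'a set \<Rightarrow> 'a set" where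
  "cjg G g A = (\<lambda>y. g \<otimes>\<^bsub>G\<^esub> y \<otimes>\<^bsub>G\<^esub> inv\<^bsub>G\<^esub> g) ` A"

context group
begin

lemma c1: "g \<in> carrier G \<Longrightarrow> y \<in> carrier G \<Longrightarrow> inv g \<otimes> (g \<otimes> y \<otimes> inv g) \<otimes> g = y"
  by (simp add: m_assoc[symmetric]) (simp add: m_assoc)
lemma c2: "g \<in> carrier G \<Longrightarrow> y \<in> carrier G \<Longrightarrow> g \<otimes> (inv g \<otimes> y \<otimes> g) \<otimes> inv g = y"
  by (simp add: m_assoc[symmetric]) (simp add: m_assoc)
lemma c3: "g \<in> carrier G \<Longrightarrow> y \<in> carrier G \<Longrightarrow> inv g \<otimes> (g \<otimes> y) = y"
  by (simp add: m_assoc[symmetric])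

lemma cjg_inv:
  assumes "g \<in> carrier G" "A \<subseteq> carrier G"
  shows "cjg G (inv g) (cjg G g A) = A"
proof -
  have "\<And>y. y \<in> A \<Longrightarrow> inv g \<otimes> (g \<otimes> y \<otimes> inv g) \<otimes> inv (inv g) = y"
    using assms by (simp add: c1 subsetD)
  then show ?thesis unfolding cjg_def image_image by simp
qed

lemma cjg_sub: "g \<in> carrier G \<Longrightarrow> A \<subseteq> carrier G \<Longrightarrow> cjg G g A \<subseteq> carrier G"
  unfolding cjg_def by auto

lemma cjg_mono: "A \<subseteq> B \<Longrightarrow> cjg G g A \<subseteq> cjg G g B"
  unfolding cjg_def by auto

lemma cjg_carrier:
  assumes "g \<in> carrier G" shows "cjg G g (carrier G) = carrier G"
proof
  show "cjg G g (carrier G) \<subseteq> carrier G" using cjg_sub assms by auto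
  show "carrier G \<subseteq> cjg G g (carrier G)"
  proof
    fix y assume y: "y \<in> carrier G"
    have "y = g \<otimes> (inv g \<otimes> y \<otimes> g) \<otimes> inv g"
      using assms y by (simp add: c2)
    then show "y \<in> cjg G g (carrier G)" unfolding cjg_def using assms y by blast
  qed
qed

lemma cjg_subgroup:
  assumes "g \<in> carrier G" "subgroup A G" shows "subgroup (cjg G g A) G"
proof (rule subgroupI)
  have AC: "A \<subseteq> carrier G" using assms subgroup.subset by metis
  show "cjg G g A \<subseteq> carrier G" using cjg_sub assms AC by simp
  have "\<one> \<in> A" using subgroup.one_closed[OF assms(2)] .
  then show "cjg G g A \<noteq> {}" unfolding cjg_def by auto
  fix a b assume a: "a \<in> cjg G g A" and b: "b \<in> cjg G g A"
  obtain x where x: "x \<in> A" "a = g \<otimes> x \<otimes> inv g" using a unfolding cjg_def by auto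
  obtain y where y: "y \<in> A" "b = g \<otimes> y \<otimes> inv g" using b unfolding cjg_def by auto
  have xc: "x \<in> carrier G" and yc: "y \<in> carrier G" using x y AC by auto
  have "inv a = g \<otimes> inv x \<otimes> inv g"
    using x xc assms(1) by (simp add: inv_mult_group m_assoc)
  moreover have "inv x \<in> A" using x(1) subgroup.m_inv_closed[OF assms(2)] by simp
  ultimately show "inv a \<in> cjg G g A" unfolding cjg_def by (rule image_eqI)
  have "a \<otimes> b = g \<otimes> (x \<otimes> y) \<otimes> inv g"
    using x y xc yc assms(1) by (simp add: m_assoc c3)
  moreover have "x \<otimes> y \<in> A" using x(1) y(1) subgroup.m_closed[OF assms(2)] by simp
  ultimately show "a \<otimes> b \<in> cjg G g A" unfolding cjg_def by (rule image_eqI)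
qed

lemma cjg_maximal:
  assumes "g \<in> carrier G" "maximal_subgroup G A" shows "maximal_subgroup G (cjg G g A)"
proof -
  have sA: "subgroup A G" and nA: "A \<noteq> carrier G"
    and mA: "\<And>K. subgroup K G \<Longrightarrow> A \<subseteq> K \<Longrightarrow> K = A \<or> K = carrier G"
    using assms(2) unfolding maximal_subgroup_def by auto
  have AC: "A \<subseteq> carrier G" using sA subgroup.subset by blast
  have ig: "inv g \<in> carrier G" using assms by simp
  have iig: "inv (inv g) = g" using assms by simp
  show ?thesis unfolding maximal_subgroup_def
  proof (intro conjI allI impI)
    show "subgroup (cjg G g A) G" using cjg_subgroup assms sA by blast
    show "cjg G g A \<noteq> carrier G"
    proof
      assume "cjg G g A = carrier G"
      then have "cjg G (inv g) (cjg G g A) = carrier G" using cjg_carrier ig by simp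
      then show False using cjg_inv assms AC nA by simp
    qed
    fix K assume K: "subgroup K G \<and> cjg G g A \<subseteq> K"
    have KC: "K \<subseteq> carrier G" using K subgroup.subset by blast
    have "A \<subseteq> cjg G (inv g) K"
      using cjg_mono[of "cjg G g A" K "inv g"] K cjg_inv assms AC by simp
    then have "cjg G (inv g) K = A \<or> cjg G (inv g) K = carrier G"
      using mA cjg_subgroup ig K by blast
    then have "cjg G g (cjg G (inv g) K) = cjg G g A \<or> cjg G g (cjg G (inv g) K) = carrier G"
      using cjg_carrier assms by auto
    moreover have "cjg G g (cjg G (inv g) K) = K"
      using cjg_inv[OF ig KC] iig by simp
    ultimately show "K = cjg G g A \<or> K = carrier G" by simp
  qed
qed

lemma exists_maximal:
  assumes fin: "finite (carrier G)" and K: "subgroup K G" "K \<noteq> carrier G"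
  shows "\<exists>M. maximal_subgroup G M \<and> K \<subseteq> M"
proof -
  define Q where "Q = {M. subgroup M G \<and> K \<subseteq> M \<and> M \<noteq> carrier G}"
  have "Q \<subseteq> Pow (carrier G)" unfolding Q_def using subgroup.subset by auto
  then have fQ: "finite Q" using fin by (simp add: finite_subset)
  have KQ: "K \<in> Q" unfolding Q_def using K by simp
  obtain M where M: "M \<in> Q" "\<And>L. L \<in> Q \<Longrightarrow> card L \<le> card M"
  proof -
    have ne: "card ` Q \<noteq> {}" using KQ by auto
    have "Max (card ` Q) \<in> card ` Q" using Max_in[OF finite_imageI[OF fQ] ne] .
    then obtain M where "M \<in> Q" "card M = Max (card ` Q)" by (metis imageE)
    moreover have "\<And>L. L \<in> Q \<Longrightarrow> card L \<le> Max (card ` Q)"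
      using Max_ge[OF finite_imageI[OF fQ, of card]] by simp
    ultimately show ?thesis using that by metis
  qed
  have KM: "K \<subseteq> M" using M unfolding Q_def by simp
  have "maximal_subgroup G M" unfolding maximal_subgroup_def
  proof (intro conjI allI impI)
    show "subgroup M G" "M \<noteq> carrier G" using M unfolding Q_def by auto
    fix L assume L: "subgroup L G \<and> M \<subseteq> L"
    show "L = M \<or> L = carrier G"
    proof (rule ccontr)
      assume nL: "\<not> (L = M \<or> L = carrier G)"
      have LQ: "L \<in> Q" using L nL KM unfolding Q_def by auto
      have ps: "M \<subset> L" using L nL by auto
      have "finite L" using L subgroup.subset fin finite_subset by metis
      then have "card M < card L" using ps psubset_card_mono by metis
      then show False using M(2)[OF LQ] by simp
    qed
  qed
  then show ?thesis using KM by auto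
qed
end

lemma (in group) key:
  assumes fin: "finite (carrier G)" and s: "s \<in> carrier G"
    and M: "max_subgroups_containing G s = {H}"
    and g: "g \<in> carrier G" and a: "a \<in> carrier G"
  shows "generate G {a, g \<otimes> s \<otimes> inv g} = carrier G \<longleftrightarrow> a \<notin> cjg G g H"
proof -
  have "H \<in> max_subgroups_containing G s" using M by simp
  then have mH: "maximal_subgroup G H" and sH: "s \<in> H"
    unfolding max_subgroups_containing_def by auto
  have mK: "maximal_subgroup G (cjg G g H)" using cjg_maximal[OF g mH] .
  have sK: "subgroup (cjg G g H) G" and nK: "cjg G g H \<noteq> carrier G"
    using mK unfolding maximal_subgroup_def by auto
  have KC: "cjg G g H \<subseteq> carrier G" using subgroup.subset[OF sK] .
  have xK: "g \<otimes> s \<otimes> inv g \<in> cjg G g H" unfolding cjg_def using sH by (rule imageI)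
  have xc: "g \<otimes> s \<otimes> inv g \<in> carrier G" using g s by simp
  let ?L = "generate G {a, g \<otimes> s \<otimes> inv g}"
  have inc: "{a, g \<otimes> s \<otimes> inv g} \<subseteq> ?L" by (auto intro: generate.incl)
  show ?thesis
  proof
    assume gen: "?L = carrier G"
    show "a \<notin> cjg G g H"
    proof
      assume "a \<in> cjg G g H"
      then have "{a, g \<otimes> s \<otimes> inv g} \<subseteq> cjg G g H" using xK by simp
      then have "?L \<subseteq> cjg G g H" using generate_subgroup_incl[OF _ sK] by simp
      then have "cjg G g H = carrier G" using gen KC by simp
      then show False using nK by simp
    qed
  next
    assume aK: "a \<notin> cjg G g H"
    show "?L = carrier G"
    proof (rule ccontr)
      assume nL: "?L \<noteq> carrier G"
      have sL: "subgroup ?L G" using generate_is_subgroup a xc by simp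
      obtain N where N: "maximal_subgroup G N" "?L \<subseteq> N"
        using exists_maximal[OF fin sL nL] by metis
      have ig: "inv g \<in> carrier G" using g by simp
      have NC: "N \<subseteq> carrier G" using N(1) subgroup.subset unfolding maximal_subgroup_def by metis
      have e: "inv g \<otimes> (g \<otimes> s \<otimes> inv g) \<otimes> inv (inv g) = s"
        using g s by (simp add: c1)
      have xN: "g \<otimes> s \<otimes> inv g \<in> N" using inc N(2) by auto
      have "s \<in> cjg G (inv g) N" unfolding cjg_def using e xN by (metis image_eqI)
      moreover have "maximal_subgroup G (cjg G (inv g) N)" using cjg_maximal[OF ig N(1)] .
      ultimately have "cjg G (inv g) N \<in> max_subgroups_containing G s"
        unfolding max_subgroups_containing_def by simp
      then have "cjg G (inv g) N = H" using M by simp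
      then have "cjg G g H = N" using cjg_inv[OF ig NC] g by simp
      moreover have "a \<in> N" using inc N(2) by auto
      ultimately show False using aK by simp
    qed
  qed
qed

lemma (in group) stab:
  assumes sH: "subgroup H G" and g: "g \<in> carrier G" and h: "h \<in> carrier G"
  shows "(H #> inv g) #> h = H #> inv g \<longleftrightarrow> h \<in> cjg G g H"
proof -
  have HC: "H \<subseteq> carrier G" using sH subgroup.subset by metis
  have ig: "inv g \<in> carrier G" using g by simp
  have igh: "inv g \<otimes> h \<in> carrier G" using g h by simp
  have "(H #> inv g) #> h = H #> (inv g \<otimes> h)" using coset_mult_assoc[OF HC ig h] .
  also have "H #> (inv g \<otimes> h) = H #> inv g \<longleftrightarrow> inv g \<otimes> h \<in> H #> inv g"
  proof
    assume "H #> (inv g \<otimes> h) = H #> inv g"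
    then show "inv g \<otimes> h \<in> H #> inv g" using rcos_self[OF igh sH] by simp
  next
    assume "inv g \<otimes> h \<in> H #> inv g"
    then show "H #> (inv g \<otimes> h) = H #> inv g" using repr_independence[OF _ ig sH] by simp
  qed
  also have "\<dots> \<longleftrightarrow> inv g \<otimes> h \<otimes> inv (inv g) \<in> H"
    using subgroup.rcos_module[OF sH is_group ig igh] .
  also have "\<dots> \<longleftrightarrow> h \<in> cjg G g H"
  proof
    assume hh: "inv g \<otimes> h \<otimes> inv (inv g) \<in> H"
    have "h = g \<otimes> (inv g \<otimes> h \<otimes> inv (inv g)) \<otimes> inv g"
      using g h by (simp add: c2)
    then show "h \<in> cjg G g H" unfolding cjg_def using hh by (rule image_eqI)
  next
    assume "h \<in> cjg G g H"
    then obtain y where y: "y \<in> H" "h = g \<otimes> y \<otimes> inv g" unfolding cjg_def by auto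
    have "y \<in> carrier G" using y HC by auto
    then have "inv g \<otimes> h \<otimes> inv (inv g) = y" using y g by (simp add: c1)
    then show "inv g \<otimes> h \<otimes> inv (inv g) \<in> H" using y by simp
  qed
  finally show ?thesis .
qed

theorem corollary2p2:
  fixes G (structure) and s :: 'a and H :: "'a set"
  assumes "group G" and "finite (carrier G)"
    and "s \<in> carrier G" and "s \<noteq> \<one>"
    and "max_subgroups_containing G s = {H}"
    and "core_free G H"
  shows "base_size G H = min_conj_tds G s"
proof -
  interpret group G by fact
  note fin = assms(2) and s = assms(3) and M = assms(5)
  have mH: "maximal_subgroup G H" using M unfolding max_subgroups_containing_def by auto
  have sH: "subgroup H G" using mH unfolding maximal_subgroup_def by auto
  have HC: "H \<subseteq> carrier G" using sH subgroup.subset by blast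
  have core: "\<And>h. h \<in> carrier G \<Longrightarrow> (\<forall>g\<in>carrier G. h \<in> cjg G g H) \<Longrightarrow> h = \<one>"
  proof -
    fix h assume "h \<in> carrier G" "\<forall>g\<in>carrier G. h \<in> cjg G g H"
    then have "h \<in> (\<Inter>g\<in>carrier G. {g \<otimes> k \<otimes> inv g | k. k \<in> H})"
      unfolding cjg_def by blast
    then show "h = \<one>" using assms(6) unfolding core_free_def by blast
  qed
  have onestab: "\<And>B. B \<subseteq> rcosets H \<Longrightarrow> \<forall>C\<in>B. C #> \<one> = C"
    using HC by (auto simp: RCOSETS_def coset_mult_one r_coset_subset_G)
  have rc: "\<And>C. C \<in> rcosets H \<Longrightarrow> \<exists>g\<in>carrier G. C = H #> inv g"
    unfolding RCOSETS_def by (metis UN_E inv_closed inv_inv singletonD)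
  have t2b: "\<exists>B. is_coset_base G H B \<and> card B \<le> card S"
    if S: "S \<subseteq> conjugates G s" "total_dominating G S" for S
  proof -
    have ex: "\<forall>x\<in>S. \<exists>g. g \<in> carrier G \<and> x = g \<otimes> s \<otimes> inv g"
      using S(1) unfolding conjugates_def by blast
    define gx where "gx x = (SOME g. g \<in> carrier G \<and> x = g \<otimes> s \<otimes> inv g)" for x
    have gx: "\<And>x. x \<in> S \<Longrightarrow> gx x \<in> carrier G \<and> x = gx x \<otimes> s \<otimes> inv (gx x)"
    proof -
      fix x assume "x \<in> S"
      then have "\<exists>g. g \<in> carrier G \<and> x = g \<otimes> s \<otimes> inv g" using ex by simp
      then show "gx x \<in> carrier G \<and> x = gx x \<otimes> s \<otimes> inv (gx x)"
        unfolding gx_def by (rule someI_ex)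
    qed
    define B where "B = (\<lambda>x. H #> inv (gx x)) ` S"
    have fS: "finite S" using S(1) fin unfolding conjugates_def
      by (metis (no_types, lifting) S(2) finite_subset nonid_def total_dominating_def Diff_subset subset_trans)
    have "is_coset_base G H B" unfolding is_coset_base_def
    proof (intro conjI)
      show "B \<subseteq> rcosets H"
      proof
        fix C assume "C \<in> B"
        then obtain x where x: "x \<in> S" "C = H #> inv (gx x)" unfolding B_def by auto
        have "inv (gx x) \<in> carrier G" using gx[OF x(1)] by simp
        then show "C \<in> rcosets H" unfolding RCOSETS_def using x(2) by auto
      qed
      show "{g \<in> carrier G. \<forall>C\<in>B. C #> g = C} = {\<one>}"
      proof
        show "{\<one>} \<subseteq> {g \<in> carrier G. \<forall>C\<in>B. C #> g = C}"
          using onestab \<open>B \<subseteq> rcosets H\<close> by auto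
        show "{g \<in> carrier G. \<forall>C\<in>B. C #> g = C} \<subseteq> {\<one>}"
        proof
          fix h assume h: "h \<in> {g \<in> carrier G. \<forall>C\<in>B. C #> g = C}"
          show "h \<in> {\<one>}"
          proof (rule ccontr)
            assume "h \<notin> {\<one>}"
            then have "h \<in> nonid G" using h unfolding nonid_def by auto
            then obtain x where x: "x \<in> S" "generate G {h, x} = carrier G"
              using S(2) unfolding total_dominating_def by blast
            have "generate G {h, gx x \<otimes> s \<otimes> inv (gx x)} = carrier G" using x gx by metis
            then have "h \<notin> cjg G (gx x) H" using key[OF fin s M] gx x h by blast
            moreover have "(H #> inv (gx x)) #> h = H #> inv (gx x)"
              using h x unfolding B_def by blast
            ultimately show False using stab[OF sH] gx x h by blast
          qed
        qed
      qed
    qed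
    moreover have "card B \<le> card S" unfolding B_def using card_image_le fS by blast
    ultimately show ?thesis by blast
  qed
  have b2t: "\<exists>S. S \<subseteq> conjugates G s \<and> total_dominating G S \<and> card S \<le> card B"
    if B: "is_coset_base G H B" for B
  proof -
    have Bs: "B \<subseteq> rcosets H" and Bst: "{g \<in> carrier G. \<forall>C\<in>B. C #> g = C} = {\<one>}"
      using B unfolding is_coset_base_def by auto
    define gc where "gc C = (SOME g. g \<in> carrier G \<and> C = H #> inv g)" for C
    have gc: "\<And>C. C \<in> B \<Longrightarrow> gc C \<in> carrier G \<and> C = H #> inv (gc C)"
    proof -
      fix C assume "C \<in> B"
      then have "\<exists>g. g \<in> carrier G \<and> C = H #> inv g" using rc Bs by auto
      then show "gc C \<in> carrier G \<and> C = H #> inv (gc C)"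
        unfolding gc_def by (rule someI_ex)
    qed
    define S where "S = (\<lambda>C. gc C \<otimes> s \<otimes> inv (gc C)) ` B"
    have "rcosets H \<subseteq> Pow (carrier G)" unfolding RCOSETS_def using HC r_coset_subset_G by auto
    then have fB: "finite B" using Bs fin by (meson finite_Pow_iff finite_subset)
    have Sc: "S \<subseteq> conjugates G s" unfolding S_def conjugates_def using gc by blast
    have "total_dominating G S" unfolding total_dominating_def
    proof (intro conjI ballI)
      show "S \<subseteq> nonid G" unfolding S_def nonid_def
      proof
        fix y assume "y \<in> (\<lambda>C. gc C \<otimes> s \<otimes> inv (gc C)) ` B"
        then obtain C where C: "C \<in> B" "y = gc C \<otimes> s \<otimes> inv (gc C)" by blast
        have gcc: "gc C \<in> carrier G" using gc C by blast
        have "y \<noteq> \<one>"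
        proof
          assume "y = \<one>"
          then have "inv (gc C) \<otimes> y \<otimes> gc C = \<one>" using gcc by simp
          moreover have "inv (gc C) \<otimes> y \<otimes> gc C = s" using C gcc s by (simp add: c1)
          ultimately show False using assms(4) by simp
        qed
        then show "y \<in> carrier G - {\<one>}" using C gcc s by simp
      qed
      fix a assume a: "a \<in> nonid G"
      then have ac: "a \<in> carrier G" "a \<noteq> \<one>" unfolding nonid_def by auto
      then obtain C where C: "C \<in> B" "C #> a \<noteq> C" using Bst by blast
      have gcc: "gc C \<in> carrier G" and Ceq: "C = H #> inv (gc C)" using gc C by auto
      have "a \<notin> cjg G (gc C) H" using stab[OF sH gcc ac(1)] C Ceq by metis
      then have "generate G {a, gc C \<otimes> s \<otimes> inv (gc C)} = carrier G"
        using key[OF fin s M gcc ac(1)] by blast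
      moreover have "gc C \<otimes> s \<otimes> inv (gc C) \<in> S" unfolding S_def using C by blast
      ultimately show "\<exists>x\<in>S. generate G {a, x} = carrier G" by blast
    qed
    moreover have "card S \<le> card B" unfolding S_def using card_image_le fB by blast
    ultimately show ?thesis using Sc by blast
  qed
  have "is_coset_base G H (rcosets H)" unfolding is_coset_base_def
  proof (intro conjI)
    show "{g \<in> carrier G. \<forall>C\<in>rcosets H. C #> g = C} = {\<one>}"
    proof
      show "{\<one>} \<subseteq> {g \<in> carrier G. \<forall>C\<in>rcosets H. C #> g = C}" using onestab by auto
      show "{g \<in> carrier G. \<forall>C\<in>rcosets H. C #> g = C} \<subseteq> {\<one>}"
      proof
        fix h assume h: "h \<in> {g \<in> carrier G. \<forall>C\<in>rcosets H. C #> g = C}"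
        have "\<forall>g\<in>carrier G. h \<in> cjg G g H"
        proof
          fix g assume g: "g \<in> carrier G"
          have "H #> inv g \<in> rcosets H" unfolding RCOSETS_def using g by auto
          then show "h \<in> cjg G g H" using stab[OF sH g] h by blast
        qed
        then show "h \<in> {\<one>}" using core h by blast
      qed
    qed
  qed simp
  then have exB: "\<exists>n B. is_coset_base G H B \<and> card B = n" by blast
  have "\<exists>B. is_coset_base G H B \<and> card B = (LEAST n. \<exists>B. is_coset_base G H B \<and> card B = n)"
    using LeastI_ex[OF exB] .
  then obtain B0 where B0: "is_coset_base G H B0" "card B0 = base_size G H"
    unfolding base_size_def by blast
  obtain S1 where S1: "S1 \<subseteq> conjugates G s" "total_dominating G S1" "card S1 \<le> card B0"
    using b2t B0(1) by blast
  have exS: "\<exists>n S. S \<subseteq> conjugates G s \<and> total_dominating G S \<and> card S = n" using S1 by blast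
  have "\<exists>S. S \<subseteq> conjugates G s \<and> total_dominating G S \<and> card S =
      (LEAST n. \<exists>S. S \<subseteq> conjugates G s \<and> total_dominating G S \<and> card S = n)"
    using LeastI_ex[OF exS] .
  then obtain S0 where S0: "S0 \<subseteq> conjugates G s" "total_dominating G S0" "card S0 = min_conj_tds G s"
    unfolding min_conj_tds_def by blast
  have "min_conj_tds G s \<le> card S1" unfolding min_conj_tds_def
    using S1 by (intro Least_le) blast
  moreover obtain B1 where B1: "is_coset_base G H B1" "card B1 \<le> card S0" using t2b S0 by blast
  have "base_size G H \<le> card B1" unfolding base_size_def
    using B1 by (intro Least_le) blast
  ultimately show ?thesis using B0 S0 S1 B1 by linarith
qed

end
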